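(* Let a class of $f$-fat geometric objects (for a constant $f$) be given. If there is an augmented range query structure (ARQS) with running time $\zeta(n)$ for this class of objects, then there is an $O(1)$-DISQS (specifically, a $(1/f)$-DISQS) with running time $O(\zeta(n))$ for these objects.
   Context: Objects are connected subsets of $\mathbb{R}^d$; the size of an object is the side length of a minimal enclosing axis-aligned hypercube; a collection is $f$-fat if for every axis-aligned hypercube $R$ of side length $r$ there are $f$ points such that every object intersecting $R$ with size at least $r$ contains one of them. An independent set is a set of pairwise disjoint objects; $\mathrm{OPT}(S)$ is the maximum size of an independent set of $S$. An ARQS with running time $\zeta(n)$ stores a set of objects of the class ($n$ = number stored) and supports, each in time $\zeta(n)$: Insert, Delete, Unmark-all (set all stored objects unmarked), Mark-intersecting$(x)$ (for an object $x$ of the class, mark all stored objects intersecting $x$), and Smallest-unmarked (report a smallest unmarked stored object). A $\beta$-DISQS with running time $f'(n)$ maintains a set $S$, $n=|S|$, supporting $\textsc{Update}(u)$ ($S\leftarrow S\oplus\{u\}$) in time $f'(n)$ and $\textsc{Query}$, which returns an independent subset of $S$ of size at least $\beta\,\mathrm{OPT}(S)$ in time $kf'(n)$ when it returns $k$ objects. *)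

theory Defs
  imports "HOL-Analysis.Analysis"
begin

type_synonym ('d) obj = "(real^'d) set"

definition cube :: "real^'d \<Rightarrow> real \<Rightarrow> ('d::finite) obj" where
  "cube a r = cbox a (\<chi> i. a $ i + r)"

definition osize :: "('d::finite) obj \<Rightarrow> real" where
  "osize X = Inf {r. 0 \<le> r \<and> (\<exists>a. X \<subseteq> cube a r)}"

definition fat :: "nat \<Rightarrow> ('d::finite) obj set \<Rightarrow> bool" where
  "fat f K \<longleftrightarrow>
     (\<forall>a r. 0 < r \<longrightarrow>
        (\<exists>P. finite P \<and> card P \<le> f \<and>
             (\<forall>X\<in>K. X \<inter> cube a r \<noteq> {} \<and> r \<le> osize X \<longrightarrow> X \<inter> P \<noteq> {})))"

definition independent :: "'a set set \<Rightarrow> bool" where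
  "independent I \<longleftrightarrow> (\<forall>X\<in>I. \<forall>Y\<in>I. X \<noteq> Y \<longrightarrow> X \<inter> Y = {})"

text \<open>Maximum size of an independent subset (S finite in all uses).\<close>
definition OPT :: "'a set set \<Rightarrow> nat" where
  "OPT S = Max (card ` {I. I \<subseteq> S \<and> independent I})"

text \<open>A program issues ARQS operations; after Smallest-unmarked it continues depending
  on the answer (None = no unmarked object). Ret returns the list of reported objects.\<close>
codatatype 'a prog =
    Ret "'a list"
  | PIns 'a "'a prog"
  | PDel 'a "'a prog"
  | PUnmark "'a prog"
  | PMark 'a "'a prog"
  | PSmall "'a option \<Rightarrow> 'a prog"

text \<open>Abstract ARQS state: (stored objects T, marked objects M).
  Valid answers of Smallest-unmarked (any smallest one, ties resolved arbitrarily).\<close>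
definition smallest_ok :: "('d::finite) obj set \<times> ('d::finite) obj set \<Rightarrow> ('d::finite) obj option \<Rightarrow> bool" where
  "smallest_ok \<sigma> r \<longleftrightarrow>
     (case \<sigma> of (T, M) \<Rightarrow>
        (case r of None \<Rightarrow> T - M = {}
         | Some y \<Rightarrow> y \<in> T - M \<and> (\<forall>z\<in>T - M. osize y \<le> osize z)))"

text \<open>run K \<zeta> p \<sigma> out \<sigma>' t: program p started on ARQS state \<sigma> terminates with output out,
  final state \<sigma>', and total cost t, each ARQS operation costing \<zeta>(n), n = number stored.\<close>
inductive run :: "('d::finite) obj set \<Rightarrow> (nat \<Rightarrow> real) \<Rightarrow> ('d::finite) obj prog \<Rightarrow> ('d::finite) obj set \<times> ('d::finite) obj set
                  \<Rightarrow> ('d::finite) obj list \<Rightarrow> ('d::finite) obj set \<times> ('d::finite) obj set \<Rightarrow> real \<Rightarrow> bool"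
  for K :: "('d::finite) obj set" and \<zeta> :: "nat \<Rightarrow> real" where
  run_ret: "run K \<zeta> (Ret xs) \<sigma> xs \<sigma> 0"
| run_ins: "x \<in> K \<Longrightarrow> x \<notin> T \<Longrightarrow> run K \<zeta> p (insert x T, M) out \<sigma>' t
            \<Longrightarrow> run K \<zeta> (PIns x p) (T, M) out \<sigma>' (\<zeta> (card T) + t)"
| run_del: "x \<in> T \<Longrightarrow> run K \<zeta> p (T - {x}, M - {x}) out \<sigma>' t
            \<Longrightarrow> run K \<zeta> (PDel x p) (T, M) out \<sigma>' (\<zeta> (card T) + t)"
| run_unmark: "run K \<zeta> p (T, {}) out \<sigma>' t
            \<Longrightarrow> run K \<zeta> (PUnmark p) (T, M) out \<sigma>' (\<zeta> (card T) + t)"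
| run_mark: "x \<in> K \<Longrightarrow> run K \<zeta> p (T, M \<union> {y\<in>T. y \<inter> x \<noteq> {}}) out \<sigma>' t
            \<Longrightarrow> run K \<zeta> (PMark x p) (T, M) out \<sigma>' (\<zeta> (card T) + t)"
| run_small: "smallest_ok (T, M) r \<Longrightarrow> run K \<zeta> (k r) (T, M) out \<sigma>' t
            \<Longrightarrow> run K \<zeta> (PSmall k) (T, M) out \<sigma>' (\<zeta> (card T) + t)"

text \<open>terminates K p \<sigma>: every execution of p from \<sigma> (for every admissible behaviour
  of the ARQS) is finite and never performs an invalid operation.\<close>
inductive terminates :: "('d::finite) obj set \<Rightarrow> ('d::finite) obj prog \<Rightarrow> ('d::finite) obj set \<times> ('d::finite) obj set \<Rightarrow> bool"
  for K :: "('d::finite) obj set" where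
  term_ret: "terminates K (Ret xs) \<sigma>"
| term_ins: "x \<in> K \<Longrightarrow> x \<notin> T \<Longrightarrow> terminates K p (insert x T, M)
            \<Longrightarrow> terminates K (PIns x p) (T, M)"
| term_del: "x \<in> T \<Longrightarrow> terminates K p (T - {x}, M - {x})
            \<Longrightarrow> terminates K (PDel x p) (T, M)"
| term_unmark: "terminates K p (T, {}) \<Longrightarrow> terminates K (PUnmark p) (T, M)"
| term_mark: "x \<in> K \<Longrightarrow> terminates K p (T, M \<union> {y\<in>T. y \<inter> x \<noteq> {}})
            \<Longrightarrow> terminates K (PMark x p) (T, M)"
| term_small: "(\<And>r. smallest_ok (T, M) r \<Longrightarrow> terminates K (k r) (T, M))
            \<Longrightarrow> terminates K (PSmall k) (T, M)"

datatype 'a dop = Upd 'a | Qry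

text \<open>Histories are stored newest operation first. S_of h is the maintained set S.\<close>
fun S_of :: "'a dop list \<Rightarrow> 'a set" where
  "S_of [] = {}"
| "S_of (Upd u # h) = (if u \<in> S_of h then S_of h - {u} else insert u (S_of h))"
| "S_of (Qry # h) = S_of h"

text \<open>Reachable ARQS states of the DISQS given by programs upd (receiving whether u \<in> S)
  and qry, starting from the empty structure.\<close>
inductive reach :: "('d::finite) obj set \<Rightarrow> (nat \<Rightarrow> real) \<Rightarrow> (bool \<Rightarrow> ('d::finite) obj \<Rightarrow> ('d::finite) obj prog)
                    \<Rightarrow> ('d::finite) obj prog \<Rightarrow> ('d::finite) obj dop list \<Rightarrow> ('d::finite) obj set \<times> ('d::finite) obj set \<Rightarrow> bool"
  for K \<zeta> upd qry where
  reach_init: "reach K \<zeta> upd qry [] ({}, {})"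
| reach_upd: "reach K \<zeta> upd qry h \<sigma> \<Longrightarrow> u \<in> K \<Longrightarrow> run K \<zeta> (upd (u \<in> S_of h) u) \<sigma> out \<sigma>' t
              \<Longrightarrow> reach K \<zeta> upd qry (Upd u # h) \<sigma>'"
| reach_qry: "reach K \<zeta> upd qry h \<sigma> \<Longrightarrow> run K \<zeta> qry \<sigma> out \<sigma>' t
              \<Longrightarrow> reach K \<zeta> upd qry (Qry # h) \<sigma>'"

end

theory Submission
  imports Defs
begin

lemma osize_attained:
  fixes X :: "(real^'d::finite) set"
  assumes ne: "X \<noteq> {}" and bd: "bounded X"
  shows "0 \<le> osize X \<and> (\<exists>a. X \<subseteq> cube a (osize X))"
proof -
  define R where "R = {r. 0 \<le> r \<and> (\<exists>a. X \<subseteq> cube a r)}"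
  obtain b where b: "X \<subseteq> cbox (-b) b" using bounded_subset_cbox_symmetric[OF bd] by blast
  have "X \<subseteq> cube (-b) (2 * norm b)"
  proof
    fix x assume "x \<in> X"
    then have "x \<in> cbox (-b) b" using b by blast
    then show "x \<in> cube (-b) (2 * norm b)"
      unfolding cube_def mem_box_cart
      using component_le_norm_cart[of b] by (smt (verit) vector_uminus_component vec_lambda_beta)
  qed
  then have Rne: "2 * norm b \<in> R" unfolding R_def by auto
  have bdd: "bdd_below R" unfolding R_def by (auto intro: bdd_belowI[of _ 0])
  have os: "osize X = Inf R" unfolding osize_def R_def by simp
  have nonneg: "0 \<le> osize X" unfolding os
    by (rule cInf_greatest) (use Rne in auto, auto simp: R_def)
  define a where "a = (\<chi> i. Inf ((\<lambda>x. x $ i) ` X))"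
  have key: "X \<subseteq> cube a r" if "r \<in> R" for r
  proof -
    from that obtain c where c: "X \<subseteq> cube c r" unfolding R_def by auto
    show ?thesis
    proof
      fix x assume xX: "x \<in> X"
      show "x \<in> cube a r" unfolding cube_def mem_box_cart
      proof
        fix i
        have bb: "bdd_below ((\<lambda>x. x $ i) ` X)"
          using c by (auto simp: cube_def mem_box_cart intro!: bdd_belowI[of _ "c $ i"])
        have l: "a $ i \<le> x $ i" unfolding a_def using xX bb by (auto intro: cInf_lower)
        have "c $ i \<le> a $ i" unfolding a_def using c ne
          by (auto intro!: cInf_greatest simp: cube_def mem_box_cart)
        moreover have "x $ i \<le> c $ i + r" using c xX by (auto simp: cube_def mem_box_cart)
        ultimately show "a $ i \<le> x $ i \<and> x $ i \<le> (\<chi> i. a $ i + r) $ i" using l by simp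
      qed
    qed
  qed
  have "X \<subseteq> cube a (osize X)"
  proof
    fix x assume xX: "x \<in> X"
    show "x \<in> cube a (osize X)" unfolding cube_def mem_box_cart
    proof
      fix i
      have l: "a $ i \<le> x $ i" using key[OF Rne] xX by (auto simp: cube_def mem_box_cart)
      have "x $ i \<le> a $ i + osize X"
      proof (rule ccontr)
        assume "\<not> ?thesis"
        then have "Inf R < x $ i - a $ i" unfolding os by simp
        then obtain r where r: "r \<in> R" "r < x $ i - a $ i"
          using cInf_less_iff[of R] Rne bdd by auto
        have "x \<in> cube a r" using key[OF r(1)] xX by blast
        then have "x $ i \<le> a $ i + r" unfolding cube_def mem_box_cart by simp
        then show False using r(2) by simp
      qed
      then show "a $ i \<le> x $ i \<and> x $ i \<le> (\<chi> i. a $ i + osize X) $ i" using l by simp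
    qed
  qed
  then show ?thesis using nonneg by blast
qed

lemma fat_point:
  fixes K :: "(real^'d::finite) set set"
  assumes fat: "fat f K" and f1: "1 \<le> f" and y: "y \<noteq> {}" "bounded y"
  shows "\<exists>P. finite P \<and> card P \<le> f \<and> (\<forall>X\<in>K. X \<inter> y \<noteq> {} \<and> osize y \<le> osize X \<longrightarrow> X \<inter> P \<noteq> {})"
proof -
  obtain a where a: "y \<subseteq> cube a (osize y)" and nn: "0 \<le> osize y" using osize_attained[OF y] by blast
  show ?thesis
  proof (cases "osize y = 0")
    case True
    have "cube a 0 = {a}" unfolding cube_def by (simp add: vec_eq_iff)
    then have "y \<subseteq> {a}" using a True by simp
    then show ?thesis using f1 by (intro exI[of _ "{a}"]) auto
  next
    case False
    then have "0 < osize y" using nn by simp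
    have "\<exists>P. finite P \<and> card P \<le> f \<and>
      (\<forall>X\<in>K. X \<inter> cube a (osize y) \<noteq> {} \<and> osize y \<le> osize X \<longrightarrow> X \<inter> P \<noteq> {})"
      using fat[unfolded fat_def, rule_format, where a=a, OF \<open>0 < osize y\<close>] .
    then obtain P where P: "finite P" "card P \<le> f"
      "\<forall>X\<in>K. X \<inter> cube a (osize y) \<noteq> {} \<and> osize y \<le> osize X \<longrightarrow> X \<inter> P \<noteq> {}"
      by (elim exE conjE)
    have "\<forall>X\<in>K. X \<inter> y \<noteq> {} \<and> osize y \<le> osize X \<longrightarrow> X \<inter> P \<noteq> {}"
    proof (intro ballI impI)
      fix X assume "X \<in> K" "X \<inter> y \<noteq> {} \<and> osize y \<le> osize X"
      moreover then have "X \<inter> cube a (osize y) \<noteq> {}" using a by blast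
      ultimately show "X \<inter> P \<noteq> {}" using P(3) by blast
    qed
    then show ?thesis using P(1,2) by blast
  qed
qed

lemma charge_count:
  fixes I A :: "'a set set" and ch :: "'a set \<Rightarrow> 'a set \<Rightarrow> bool"
  assumes fI: "finite I" and ind: "independent I" and fA: "finite A"
    and cov: "\<forall>X\<in>I. \<exists>y\<in>A. ch y X"
    and pts: "\<forall>y\<in>A. \<exists>P. finite P \<and> card P \<le> f \<and> (\<forall>X\<in>I. ch y X \<longrightarrow> X \<inter> P \<noteq> {})"
  shows "card I \<le> f * card A"
proof -
  define F where "F y = {X\<in>I. ch y X}" for y
  have "I \<subseteq> (\<Union>y\<in>A. F y)" using cov unfolding F_def by auto
  then have "card I \<le> card (\<Union>y\<in>A. F y)" using fA fI by (intro card_mono) (auto simp: F_def)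
  also have "\<dots> \<le> (\<Sum>y\<in>A. card (F y))" by (rule card_UN_le[OF fA])
  also have "\<dots> \<le> (\<Sum>y\<in>A. f)"
  proof (rule sum_mono)
    fix y assume "y \<in> A"
    then obtain P where P: "finite P" "card P \<le> f" "\<forall>X\<in>I. ch y X \<longrightarrow> X \<inter> P \<noteq> {}"
      using pts by blast
    define pt where "pt X = (SOME p. p \<in> X \<inter> P)" for X
    have ptin: "pt X \<in> X \<inter> P" if "X \<in> F y" for X
    proof -
      have "\<exists>p. p \<in> X \<inter> P" using that P(3) unfolding F_def by auto
      then show ?thesis unfolding pt_def by (rule someI_ex)
    qed
    have "inj_on pt (F y)"
    proof (rule inj_onI)
      fix X X' assume XF: "X \<in> F y" "X' \<in> F y" and eq: "pt X = pt X'"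
      have "pt X \<in> X" using ptin[OF XF(1)] by simp
      moreover have "pt X \<in> X'" using ptin[OF XF(2)] eq by simp
      ultimately have "X \<inter> X' \<noteq> {}" by blast
      moreover have "X \<in> I" "X' \<in> I" using \<open>X \<in> F y\<close> \<open>X' \<in> F y\<close> by (auto simp: F_def)
      ultimately show "X = X'" using ind unfolding independent_def by blast
    qed
    moreover have "pt ` F y \<subseteq> P" using ptin by (auto simp del: Int_iff)
    ultimately have "card (F y) \<le> card P" using P(1) by (intro card_inj_on_le)
    then show "card (F y) \<le> f" using P(2) by simp
  qed
  also have "\<dots> = f * card A" by simp
  finally show ?thesis .
qed

lemma OPT_attained:
  assumes "finite T"
  shows "\<exists>I. I \<subseteq> T \<and> independent I \<and> OPT T = card I"
proof -
  have fin: "finite (card ` {I. I \<subseteq> T \<and> independent I})" using assms by simp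
  have "{} \<in> {I. I \<subseteq> T \<and> independent I}" by (simp add: independent_def)
  then have ne: "card ` {I. I \<subseteq> T \<and> independent I} \<noteq> {}" by blast
  show ?thesis using Max_in[OF fin ne] unfolding OPT_def by auto
qed


datatype 'a qst = is_loop: QLoop (qacc: "'a list") | is_mark: QMark (qy: 'a) (qacc: "'a list") | QDone (qacc: "'a list")

primcorec qprog :: "'a qst \<Rightarrow> 'a prog" where
 "qprog s = (if is_loop s then PSmall (\<lambda>r. qprog (case r of None \<Rightarrow> QDone (qacc s) | Some y \<Rightarrow> QMark y (qacc s)))
   else if is_mark s then PMark (qy s) (qprog (QLoop (qy s # qacc s)))
   else Ret (rev (qacc s)))"

lemma qprog_loop: "qprog (QLoop acc) = PSmall (\<lambda>r. qprog (case r of None \<Rightarrow> QDone acc | Some y \<Rightarrow> QMark y acc))"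
  by (subst qprog.code) (auto intro!: ext split: option.split)
lemma qprog_mark: "qprog (QMark y acc) = PMark y (qprog (QLoop (y#acc)))"
  by (subst qprog.code) simp
lemma qprog_done: "qprog (QDone acc) = Ret (rev acc)"
  by (subst qprog.code) simp

definition LInv :: "'a set set \<Rightarrow> 'a set list \<Rightarrow> 'a set set \<Rightarrow> bool" where
  "LInv T acc M \<longleftrightarrow> M = {z\<in>T. \<exists>y\<in>set acc. z \<inter> y \<noteq> {}} \<and> set acc \<subseteq> T \<and> distinct acc
     \<and> independent (set acc)"

definition Charged :: "('d::finite) obj list \<Rightarrow> ('d::finite) obj set \<Rightarrow> bool" where
  "Charged acc M \<longleftrightarrow> (\<forall>X\<in>M. \<exists>y\<in>set acc. X \<inter> y \<noteq> {} \<and> osize y \<le> osize X)"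

lemma LInv_step:
  fixes T :: "('d::finite) obj set"
  assumes inv: "LInv T acc M" "Charged acc M" and sm: "smallest_ok (T, M) (Some y)"
    and ne: "\<forall>X\<in>T. X \<noteq> {}"
  shows "LInv T (y#acc) (M \<union> {z\<in>T. z \<inter> y \<noteq> {}}) \<and> Charged (y#acc) (M \<union> {z\<in>T. z \<inter> y \<noteq> {}})"
proof -
  have yT: "y \<in> T" "y \<notin> M" and small: "\<forall>z\<in>T - M. osize y \<le> osize z"
    using sm by (auto simp: smallest_ok_def)
  have Mdef: "M = {z\<in>T. \<exists>y\<in>set acc. z \<inter> y \<noteq> {}}" using inv by (simp add: LInv_def)
  have nacc: "y \<inter> z = {}" if "z \<in> set acc" for z
    using yT Mdef that by blast
  have ynot: "y \<notin> set acc"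
  proof
    assume "y \<in> set acc"
    then have "y \<inter> y = {}" using nacc by blast
    then show False using ne yT by auto
  qed
  have indep: "independent (set (y#acc))"
    using inv nacc unfolding LInv_def independent_def by (auto simp: Int_commute)
  have l: "LInv T (y#acc) (M \<union> {z\<in>T. z \<inter> y \<noteq> {}})"
    using inv ynot indep yT Mdef unfolding LInv_def by auto
  have c: "Charged (y#acc) (M \<union> {z\<in>T. z \<inter> y \<noteq> {}})"
    unfolding Charged_def
  proof
    fix X assume X: "X \<in> M \<union> {z\<in>T. z \<inter> y \<noteq> {}}"
    show "\<exists>y'\<in>set (y#acc). X \<inter> y' \<noteq> {} \<and> osize y' \<le> osize X"
    proof (cases "X \<in> M")
      case True then show ?thesis using inv(2) unfolding Charged_def by auto
    next
      case False
      then have "X \<in> T - M" "X \<inter> y \<noteq> {}" using X by auto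
      then show ?thesis using small by auto
    qed
  qed
  show ?thesis using l c by blast
qed

definition SInv :: "('d::finite) obj set \<Rightarrow> ('d::finite) obj set \<Rightarrow> ('d::finite) obj qst \<Rightarrow> bool" where
  "SInv T M s \<longleftrightarrow> LInv T (qacc s) M \<and> Charged (qacc s) M \<and>
     (is_mark s \<longrightarrow> smallest_ok (T, M) (Some (qy s))) \<and>
     (\<not> is_loop s \<and> \<not> is_mark s \<longrightarrow> T - M = {})"

lemma loop_run:
  assumes "run K \<zeta> p \<sigma> out \<sigma>' t"
  shows "\<And>s T M. p = qprog s \<Longrightarrow> \<sigma> = (T, M) \<Longrightarrow> SInv T M s \<Longrightarrow> T \<subseteq> K \<Longrightarrow> \<forall>X\<in>T. X \<noteq> {} \<Longrightarrow>
     \<exists>acc' M'. out = rev acc' \<and> \<sigma>' = (T, M') \<and> LInv T acc' M' \<and> Charged acc' M' \<and> T - M' = {} \<and>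
       t \<le> (2 * real (length acc') - 2 * real (length (qacc s)) + (if is_loop s then 1 else 0)) * \<zeta> (card T)"
  using assms
proof induction
  case (run_ret xs \<sigma>)
  then show ?case
    by (cases s) (auto simp: qprog_loop qprog_mark qprog_done SInv_def)
next
  case (run_ins x T p M out \<sigma>' t)
  then show ?case by (cases s) (auto simp: qprog_loop qprog_mark qprog_done)
next
  case (run_del x T p M out \<sigma>' t)
  then show ?case by (cases s) (auto simp: qprog_loop qprog_mark qprog_done)
next
  case (run_unmark p T out \<sigma>' t M)
  then show ?case by (cases s) (auto simp: qprog_loop qprog_mark qprog_done)
next
  case (run_mark x p T0 M0 out \<sigma>' t)
  have e: "T0 = T" "M0 = M" using run_mark.prems by auto
  from run_mark obtain y acc where s: "s = QMark y acc"
    by (cases s) (auto simp: qprog_loop qprog_mark qprog_done)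
  have xy: "x = y" and pp: "p = qprog (QLoop (y#acc))" using run_mark.prems s by (auto simp: qprog_mark)
  have TM: "T = T" and sinv: "SInv T M s" using run_mark.prems by auto
  have "LInv T (y#acc) (M \<union> {z\<in>T. z \<inter> y \<noteq> {}}) \<and> Charged (y#acc) (M \<union> {z\<in>T. z \<inter> y \<noteq> {}})"
    using LInv_step[of T acc M y] sinv s e run_mark.prems by (auto simp: SInv_def)
  then have sd: "SInv T (M \<union> {z\<in>T. z \<inter> y \<noteq> {}}) (QLoop (y#acc))" by (simp add: SInv_def)
  then obtain acc' M' where r: "out = rev acc'" "\<sigma>' = (T, M')" "LInv T acc' M'" "Charged acc' M'" "T - M' = {}"
    "t \<le> (2 * real (length acc') - 2 * real (length (qacc (QLoop (y#acc)))) + (if is_loop (QLoop (y#acc)) then 1 else 0)) * \<zeta> (card T)"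
  proof -
    have p2: "(T0, M0 \<union> {y \<in> T0. y \<inter> x \<noteq> {}}) = (T, M \<union> {z\<in>T. z \<inter> y \<noteq> {}})" using e xy by simp
    show ?thesis using run_mark.IH[OF pp p2 sd run_mark.prems(4) run_mark.prems(5)] by (elim exE conjE) (rule that, assumption+)
  qed
  have "\<zeta> (card T) + t \<le> (2 * real (length acc') - 2 * real (length acc) + 0) * \<zeta> (card T)"
    using r(6) by (simp add: algebra_simps)
  then show ?case using r s e by (intro exI[of _ acc'] exI[of _ M']) auto
next
  case (run_small T0 M0 r k out \<sigma>' t)
  have e: "T0 = T" "M0 = M" using run_small.prems by auto
  from run_small obtain acc where s: "s = QLoop acc"
    by (cases s) (auto simp: qprog_loop qprog_mark qprog_done)
  have kk: "k r = qprog (case r of None \<Rightarrow> QDone acc | Some y \<Rightarrow> QMark y acc)"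
    using run_small.prems s by (auto simp: qprog_loop)
  have sinv: "SInv T M s" using run_small.prems by auto
  show ?case
  proof (cases r)
    case None
    then have sd: "SInv T M (QDone acc)" using sinv s e run_small.hyps(1) by (auto simp: SInv_def smallest_ok_def)
    then obtain acc' M' where r: "out = rev acc'" "\<sigma>' = (T, M')" "LInv T acc' M'" "Charged acc' M'" "T - M' = {}"
      "t \<le> (2 * real (length acc') - 2 * real (length (qacc (QDone acc))) + (if is_loop (QDone acc) then 1 else 0)) * \<zeta> (card T)"
    proof -
      have k1: "k r = qprog (QDone acc)" using kk None by simp
      have p2: "(T0, M0) = (T, M)" using e by simp
      show ?thesis using run_small.IH[OF k1 p2 sd run_small.prems(4) run_small.prems(5)] by (elim exE conjE) (rule that, assumption+)
    qed
    have "\<zeta> (card T) + t \<le> (2 * real (length acc') - 2 * real (length acc) + 1) * \<zeta> (card T)"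
      using r(6) by (simp add: algebra_simps)
    then show ?thesis using r s e by (intro exI[of _ acc'] exI[of _ M']) auto
  next
    case (Some y)
    then have sd: "SInv T M (QMark y acc)" using sinv s e run_small.hyps(1) by (auto simp: SInv_def)
    then obtain acc' M' where r: "out = rev acc'" "\<sigma>' = (T, M')" "LInv T acc' M'" "Charged acc' M'" "T - M' = {}"
      "t \<le> (2 * real (length acc') - 2 * real (length (qacc (QMark y acc))) + (if is_loop (QMark y acc) then 1 else 0)) * \<zeta> (card T)"
    proof -
      have k1: "k r = qprog (QMark y acc)" using kk Some by simp
      have p2: "(T0, M0) = (T, M)" using e by simp
      show ?thesis using run_small.IH[OF k1 p2 sd run_small.prems(4) run_small.prems(5)] by (elim exE conjE) (rule that, assumption+)
    qed
    have "\<zeta> (card T) + t \<le> (2 * real (length acc') - 2 * real (length acc) + 1) * \<zeta> (card T)"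
      using r(6) by (simp add: algebra_simps)
    then show ?thesis using r s e by (intro exI[of _ acc'] exI[of _ M']) auto
  qed
qed


lemma loop_term:
  fixes T :: "('d::finite) obj set"
  assumes fin: "finite T" and TK: "T \<subseteq> K" and ne: "\<forall>X\<in>T. X \<noteq> {}"
  shows "terminates K (qprog (QLoop acc)) (T, M)"
proof (induction "card (T - M)" arbitrary: M acc rule: less_induct)
  case less
  show ?case unfolding qprog_loop
  proof (rule term_small)
    fix r assume sm: "smallest_ok (T, M) r"
    show "terminates K (qprog (case r of None \<Rightarrow> QDone acc | Some y \<Rightarrow> QMark y acc)) (T, M)"
    proof (cases r)
      case None
      then show ?thesis by (simp add: qprog_done term_ret)
    next
      case (Some y)
      then have yT: "y \<in> T - M" using sm by (simp add: smallest_ok_def)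
      define M' where "M' = M \<union> {z\<in>T. z \<inter> y \<noteq> {}}"
      have "y \<notin> T - M'" using yT ne unfolding M'_def by auto
      then have "T - M' \<subset> T - M" using yT unfolding M'_def by auto
      then have "card (T - M') < card (T - M)" using fin by (intro psubset_card_mono) auto
      then have "terminates K (qprog (QLoop (y#acc))) (T, M')" by (rule less.hyps)
      moreover have "y \<in> K" using yT TK by auto
      ultimately show ?thesis using Some by (simp add: qprog_mark M'_def term_mark)
    qed
  qed
qed

definition updp :: "bool \<Rightarrow> ('d::finite) obj \<Rightarrow> ('d::finite) obj prog" where
  "updp b u = (if b then PDel u (Ret []) else PIns u (Ret []))"

definition qryp :: "('d::finite) obj prog" where
  "qryp = PUnmark (qprog (QLoop []))"

lemma run_RetD: "run K \<zeta> (Ret xs) \<sigma> out \<sigma>' t \<Longrightarrow> out = xs \<and> \<sigma>' = \<sigma> \<and> t = 0"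
  by (erule run.cases) auto

lemma run_DelD: "run K \<zeta> (PDel u (Ret [])) (T, M) out \<sigma>' t \<Longrightarrow> \<sigma>' = (T - {u}, M - {u}) \<and> t = \<zeta> (card T)"
  by (erule run.cases) (auto dest: run_RetD)

lemma run_InsD: "run K \<zeta> (PIns u (Ret [])) (T, M) out \<sigma>' t \<Longrightarrow> \<sigma>' = (insert u T, M) \<and> t = \<zeta> (card T)"
  by (erule run.cases) (auto dest: run_RetD)

lemma run_UnmarkD: "run K \<zeta> (PUnmark p) (T, M) out \<sigma>' t \<Longrightarrow> \<exists>t1. run K \<zeta> p (T, {}) out \<sigma>' t1 \<and> t = \<zeta> (card T) + t1"
  by (erule run.cases) auto

lemma qry_run:
  fixes T :: "('d::finite) obj set"
  assumes r: "run K \<zeta> qryp (T, M) out \<sigma>' t" and TK: "T \<subseteq> K" and ne: "\<forall>X\<in>T. X \<noteq> {}"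
  shows "\<exists>acc' M'. out = rev acc' \<and> \<sigma>' = (T, M') \<and> LInv T acc' M' \<and> Charged acc' M' \<and> T - M' = {} \<and>
     t \<le> (2 * real (length acc') + 2) * \<zeta> (card T)"
proof -
  obtain t1 where r1: "run K \<zeta> (qprog (QLoop [])) (T, {}) out \<sigma>' t1" and tt: "t = \<zeta> (card T) + t1"
    using run_UnmarkD[OF r[unfolded qryp_def]] by blast
  have "SInv T {} (QLoop [])" by (simp add: SInv_def LInv_def Charged_def independent_def)
  from loop_run[OF r1 refl refl this TK ne] obtain acc' M' where
    a: "out = rev acc'" "\<sigma>' = (T, M')" "LInv T acc' M'" "Charged acc' M'" "T - M' = {}"
    "t1 \<le> (2 * real (length acc') - 2 * real (length (qacc (QLoop ([]::('d::finite) obj list)))) + (if is_loop (QLoop ([]::('d::finite) obj list)) then 1 else 0)) * \<zeta> (card T)"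
    by (elim exE conjE) (rule that, assumption+)
  have "t \<le> (2 * real (length acc') + 2) * \<zeta> (card T)" using a(6) tt by (simp add: algebra_simps)
  then show ?thesis using a by blast
qed

lemma S_of_finite: "finite (S_of h)"
  by (induction h rule: S_of.induct) auto

lemma reach_inv:
  assumes "reach K \<zeta> updp qryp h \<sigma>" and ne: "\<forall>X\<in>K. X \<noteq> {}"
  shows "fst \<sigma> = S_of h \<and> fst \<sigma> \<subseteq> K"
  using assms(1)
proof induction
  case reach_init
  then show ?case by simp
next
  case (reach_upd h \<sigma> u out \<sigma>' t)
  obtain T M where s: "\<sigma> = (T, M)" by (cases \<sigma>)
  show ?case
  proof (cases "u \<in> S_of h")
    case True
    then have "u \<in> T" using reach_upd.IH s by simp
    from reach_upd.hyps(3) True s have "run K \<zeta> (PDel u (Ret [])) (T, M) out \<sigma>' t" by (simp add: updp_def)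
    then have "\<sigma>' = (T - {u}, M - {u})" by (auto dest: run_DelD)
    then show ?thesis using reach_upd.IH s True by auto
  next
    case False
    from reach_upd.hyps(3) False s have "run K \<zeta> (PIns u (Ret [])) (T, M) out \<sigma>' t" by (simp add: updp_def)
    then have "\<sigma>' = (insert u T, M)" by (auto dest: run_InsD)
    then show ?thesis using reach_upd.IH s False reach_upd.hyps(2) by auto
  qed
next
  case (reach_qry h \<sigma> out \<sigma>' t)
  obtain T M where s: "\<sigma> = (T, M)" by (cases \<sigma>)
  have "T \<subseteq> K" using reach_qry.IH s by auto
  moreover then have "\<forall>X\<in>T. X \<noteq> {}" using ne by blast
  ultimately obtain acc' M' where "\<sigma>' = (T, M')"
    using qry_run[of K \<zeta> T M out \<sigma>' t] reach_qry.hyps(2) s by blast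
  then show ?case using reach_qry.IH s by auto
qed


theorem lemma7:
  fixes K :: "(real^'d) set set" and f :: nat and \<zeta> :: "nat \<Rightarrow> real"
  assumes objects: "\<forall>X\<in>K. X \<noteq> {} \<and> connected X \<and> bounded X"
    and fat: "fat f K"
    and zeta_nonneg: "\<forall>n. 0 \<le> \<zeta> n"
  shows "\<exists>upd qry (c::real). \<forall>h \<sigma>. reach K \<zeta> upd qry h \<sigma> \<longrightarrow>
           (\<forall>u\<in>K. terminates K (upd (u \<in> S_of h) u) \<sigma> \<and>
              (\<forall>out \<sigma>' t. run K \<zeta> (upd (u \<in> S_of h) u) \<sigma> out \<sigma>' t
                   \<longrightarrow> t \<le> c * \<zeta> (card (S_of h)))) \<and>
           terminates K qry \<sigma> \<and>
           (\<forall>out \<sigma>' t. run K \<zeta> qry \<sigma> out \<sigma>' t \<longrightarrow>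
              set out \<subseteq> S_of h \<and> distinct out \<and> independent (set out) \<and>
              (1 / real f) * real (OPT (S_of h)) \<le> real (length out) \<and>
              t \<le> c * real (max 1 (length out)) * \<zeta> (card (S_of h)))"
proof -
  have ne: "\<forall>X\<in>K. X \<noteq> {}" using objects by blast
  have main: "(\<forall>u\<in>K. terminates K (updp (u \<in> S_of h) u) \<sigma> \<and>
              (\<forall>out \<sigma>' t. run K \<zeta> (updp (u \<in> S_of h) u) \<sigma> out \<sigma>' t
                   \<longrightarrow> t \<le> 4 * \<zeta> (card (S_of h)))) \<and>
           terminates K qryp \<sigma> \<and>
           (\<forall>out \<sigma>' t. run K \<zeta> qryp \<sigma> out \<sigma>' t \<longrightarrow>
              set out \<subseteq> S_of h \<and> distinct out \<and> independent (set out) \<and>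
              (1 / real f) * real (OPT (S_of h)) \<le> real (length out) \<and>
              t \<le> 4 * real (max 1 (length out)) * \<zeta> (card (S_of h)))"
    if rh: "reach K \<zeta> updp qryp h \<sigma>" for h \<sigma>
  proof -
    obtain T M where s: "\<sigma> = (T, M)" by (cases \<sigma>)
    have TS: "T = S_of h" and TK: "T \<subseteq> K" using reach_inv[OF rh ne] s by auto
    have fin: "finite T" using TS S_of_finite by simp
    have neT: "\<forall>X\<in>T. X \<noteq> {}" using TK ne by blast
    have zT: "0 \<le> \<zeta> (card T)" using zeta_nonneg by simp
    have U: "\<forall>u\<in>K. terminates K (updp (u \<in> S_of h) u) \<sigma> \<and>
              (\<forall>out \<sigma>' t. run K \<zeta> (updp (u \<in> S_of h) u) \<sigma> out \<sigma>' t
                   \<longrightarrow> t \<le> 4 * \<zeta> (card (S_of h)))"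
    proof
      fix u assume uK: "u \<in> K"
      show "terminates K (updp (u \<in> S_of h) u) \<sigma> \<and>
              (\<forall>out \<sigma>' t. run K \<zeta> (updp (u \<in> S_of h) u) \<sigma> out \<sigma>' t
                   \<longrightarrow> t \<le> 4 * \<zeta> (card (S_of h)))"
      proof (cases "u \<in> T")
        case True
        have "terminates K (PDel u (Ret [])) (T, M)" by (rule term_del[OF True term_ret])
        moreover have "t \<le> 4 * \<zeta> (card T)" if "run K \<zeta> (PDel u (Ret [])) (T, M) out \<sigma>' t" for out \<sigma>' t
          using run_DelD[OF that] zT by simp
        ultimately show ?thesis using True TS s by (simp add: updp_def)
      next
        case False
        have "terminates K (PIns u (Ret [])) (T, M)" by (rule term_ins[OF uK False term_ret])
        moreover have "t \<le> 4 * \<zeta> (card T)" if "run K \<zeta> (PIns u (Ret [])) (T, M) out \<sigma>' t" for out \<sigma>' t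
          using run_InsD[OF that] zT by simp
        ultimately show ?thesis using False TS s by (simp add: updp_def)
      qed
    qed
    have Q1: "terminates K qryp \<sigma>" unfolding qryp_def s
      by (rule term_unmark, rule loop_term[OF fin TK neT])
    have Q2: "set out \<subseteq> S_of h \<and> distinct out \<and> independent (set out) \<and>
              (1 / real f) * real (OPT (S_of h)) \<le> real (length out) \<and>
              t \<le> 4 * real (max 1 (length out)) * \<zeta> (card (S_of h))"
      if rq: "run K \<zeta> qryp \<sigma> out \<sigma>' t" for out \<sigma>' t
    proof -
      obtain acc' M' where a: "out = rev acc'" "\<sigma>' = (T, M')" "LInv T acc' M'" "Charged acc' M'" "T - M' = {}"
        "t \<le> (2 * real (length acc') + 2) * \<zeta> (card T)"
        using qry_run[OF rq[unfolded s] TK neT] by (elim exE conjE) (rule that, assumption+)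
      have accT: "set acc' \<subseteq> T" and dist: "distinct acc'" and ind: "independent (set acc')"
        using a(3) by (auto simp: LInv_def)
      have len: "length out = card (set acc')" using a(1) dist by (simp add: distinct_card)
      have opt: "(1 / real f) * real (OPT (S_of h)) \<le> real (length out)"
      proof (cases "f = 0")
        case True then show ?thesis by simp
      next
        case False
        then have f1: "1 \<le> f" by simp
        obtain I where I: "I \<subseteq> T" "independent I" "OPT T = card I" using OPT_attained[OF fin] by blast
        have "card I \<le> f * card (set acc')"
        proof (rule charge_count[where ch = "\<lambda>y X. X \<inter> y \<noteq> {} \<and> osize y \<le> osize X"])
          show "finite I" using I(1) fin by (rule finite_subset)
          show "independent I" by (rule I(2))
          show "finite (set acc')" by simp
          show "\<forall>X\<in>I. \<exists>y\<in>set acc'. X \<inter> y \<noteq> {} \<and> osize y \<le> osize X"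
            using a(4,5) I(1) unfolding Charged_def by blast
          show "\<forall>y\<in>set acc'. \<exists>P. finite P \<and> card P \<le> f \<and> (\<forall>X\<in>I. X \<inter> y \<noteq> {} \<and> osize y \<le> osize X \<longrightarrow> X \<inter> P \<noteq> {})"
          proof
            fix y assume "y \<in> set acc'"
            then have yK: "y \<in> K" using accT TK by blast
            then have "y \<noteq> {}" "bounded y" using objects by auto
            from fat_point[OF fat f1 this] obtain P where
              P: "finite P" "card P \<le> f" "\<forall>X\<in>K. X \<inter> y \<noteq> {} \<and> osize y \<le> osize X \<longrightarrow> X \<inter> P \<noteq> {}"
              by blast
            have "\<forall>X\<in>I. X \<inter> y \<noteq> {} \<and> osize y \<le> osize X \<longrightarrow> X \<inter> P \<noteq> {}"
              using P(3) I(1) TK by blast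
            then show "\<exists>P. finite P \<and> card P \<le> f \<and> (\<forall>X\<in>I. X \<inter> y \<noteq> {} \<and> osize y \<le> osize X \<longrightarrow> X \<inter> P \<noteq> {})"
              using P(1,2) by blast
          qed
        qed
        then have "real (OPT (S_of h)) \<le> real f * real (length out)"
          using I(3) TS len by (simp flip: of_nat_mult)
        then have "(1 / real f) * real (OPT (S_of h)) \<le> (1 / real f) * (real f * real (length out))"
          by (intro mult_left_mono) auto
        also have "\<dots> = real (length out)" using False by simp
        finally show ?thesis .
      qed
      have "real (2 * length acc' + 2) \<le> 4 * real (max 1 (length out))"
        using a(1) by (simp add: max_def)
      then have "(2 * real (length acc') + 2) * \<zeta> (card T) \<le> (4 * real (max 1 (length out))) * \<zeta> (card T)"
        using zT by (intro mult_right_mono) auto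
      then have cost: "t \<le> 4 * real (max 1 (length out)) * \<zeta> (card (S_of h))"
        using a(6) TS by simp
      show ?thesis using a(1) accT dist ind opt cost TS by auto
    qed
    show ?thesis using U Q1 Q2 by blast
  qed
  show ?thesis by (intro exI[of _ updp] exI[of _ qryp] exI[of _ "4::real"] allI impI) (rule main)
qed

end
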